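(* Let $M$ be a matroid on $S$ and $N$ a matroid on $T$, with $S\cap T=\emptyset$, let $P=M\mathbin{\Box} N$, and let $U\subseteq S\cup T$. Then $$P|U = M|(U\cap S)\ \mathbin{\Box}\ \mathrm{L}^i\big(N|(U\cap T)\big)\qquad\text{and}\qquad P/U=\mathrm{T}^j\big(M/(U\cap S)\big)\ \mathbin{\Box}\ N/(U\cap T),$$ where $i=\lambda_M(U\cap S)$ and $j=\nu_N(U\cap T)$.
   Context: For a matroid $M$ on $S$ write $\rho_M$ for rank, $\rho(M)=\rho_M(S)$, $\nu_M(A)=|A|-\rho_M(A)$, $\lambda_M(A)=\rho(M)-\rho_M(A)$. For matroids $M$ on $S$ and $N$ on $T$ with $S\cap T=\emptyset$, the free product $M\mathbin{\Box} N$ is the matroid on $S\cup T$ whose independent sets are those $A$ with $A\cap S$ independent in $M$ and $\lambda_M(A\cap S)\geq\nu_N(A\cap T)$. The truncation $\mathrm{T}M$ of $M$ is the matroid whose independent sets are the independent sets $A$ of $M$ with $|A|\leq\max\{0,\rho(M)-1\}$; the (Higgs) lift $\mathrm{L}M$ is the matroid whose independent sets are the $A\subseteq S$ with $\nu_M(A)\leq 1$. $\mathrm{T}^i$ and $\mathrm{L}^i$ denote $i$-fold iterates ($\mathrm{T}^0=\mathrm{L}^0=$ identity). $|$ denotes restriction and $/$ contraction. *)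

theory Defs
  imports Main
begin

record 'a matroid =
  ground :: "'a set"
  indep :: "'a set \<Rightarrow> bool"

definition matroid :: "'a matroid \<Rightarrow> bool" where
  "matroid M \<longleftrightarrow>
     finite (ground M) \<and>
     indep M {} \<and>
     (\<forall>A. indep M A \<longrightarrow> A \<subseteq> ground M) \<and>
     (\<forall>A B. indep M A \<and> B \<subseteq> A \<longrightarrow> indep M B) \<and>
     (\<forall>A B. indep M A \<and> indep M B \<and> card A < card B \<longrightarrow>
        (\<exists>x \<in> B - A. indep M (insert x A)))"

definition rank :: "'a matroid \<Rightarrow> 'a set \<Rightarrow> nat" where
  "rank M A = Max {card B | B. B \<subseteq> A \<and> indep M B}"

definition mrank :: "'a matroid \<Rightarrow> nat" where
  "mrank M = rank M (ground M)"

definition nullity :: "'a matroid \<Rightarrow> 'a set \<Rightarrow> nat" where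
  "nullity M A = card A - rank M A"

text \<open>\<lambda>_M(A) = \<rho>(M) - \<rho>_M(A)\<close>
definition corank :: "'a matroid \<Rightarrow> 'a set \<Rightarrow> nat" where
  "corank M A = mrank M - rank M A"

definition free_product :: "'a matroid \<Rightarrow> 'a matroid \<Rightarrow> 'a matroid" where
  "free_product M N =
     \<lparr> ground = ground M \<union> ground N,
       indep = (\<lambda>A. A \<subseteq> ground M \<union> ground N \<and> indep M (A \<inter> ground M) \<and>
                     corank M (A \<inter> ground M) \<ge> nullity N (A \<inter> ground N)) \<rparr>"

definition restrict :: "'a matroid \<Rightarrow> 'a set \<Rightarrow> 'a matroid" where
  "restrict M X = \<lparr> ground = X, indep = (\<lambda>A. A \<subseteq> X \<and> indep M A) \<rparr>"

definition contract :: "'a matroid \<Rightarrow> 'a set \<Rightarrow> 'a matroid" where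
  "contract M X = \<lparr> ground = ground M - X,
     indep = (\<lambda>A. A \<subseteq> ground M - X \<and> rank M (A \<union> X) = card A + rank M X) \<rparr>"

definition trunc :: "'a matroid \<Rightarrow> 'a matroid" where
  "trunc M = \<lparr> ground = ground M,
     indep = (\<lambda>A. indep M A \<and> int (card A) \<le> max 0 (int (mrank M) - 1)) \<rparr>"

definition lift :: "'a matroid \<Rightarrow> 'a matroid" where
  "lift M = \<lparr> ground = ground M,
     indep = (\<lambda>A. A \<subseteq> ground M \<and> nullity M A \<le> 1) \<rparr>"

end

theory Submission
  imports Defs
begin


definition pre :: "'a matroid \<Rightarrow> bool" where
  "pre K \<longleftrightarrow> finite (ground K) \<and> indep K {} \<and> (\<forall>A. indep K A \<longrightarrow> A \<subseteq> ground K) \<and>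
     (\<forall>A B. indep K A \<and> B \<subseteq> A \<longrightarrow> indep K B)"

lemma matroid_pre: "matroid M \<Longrightarrow> pre M"
  unfolding matroid_def pre_def by (elim conjE) (intro conjI)

lemma pre_finite: "pre K \<Longrightarrow> finite (ground K)" by (simp add: pre_def)
lemma pre_empty: "pre K \<Longrightarrow> indep K {}" by (simp add: pre_def)
lemma indep_sub_ground: "pre K \<Longrightarrow> indep K B \<Longrightarrow> B \<subseteq> ground K"
  unfolding pre_def by simp
lemma indep_down: "pre K \<Longrightarrow> indep K A \<Longrightarrow> B \<subseteq> A \<Longrightarrow> indep K B"
  unfolding pre_def by auto
lemma preI: "finite (ground K) \<Longrightarrow> indep K {} \<Longrightarrow> (\<And>A. indep K A \<Longrightarrow> A \<subseteq> ground K) \<Longrightarrow>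
   (\<And>A B. indep K A \<Longrightarrow> B \<subseteq> A \<Longrightarrow> indep K B) \<Longrightarrow> pre K"
  unfolding pre_def by auto
lemma indep_finite: "pre K \<Longrightarrow> indep K B \<Longrightarrow> finite B"
  using indep_sub_ground pre_finite finite_subset by metis
lemma sub_finite: "pre K \<Longrightarrow> B \<subseteq> ground K \<Longrightarrow> finite B"
  using pre_finite finite_subset by metis

lemma rank_set_finite:
  assumes "pre K" shows "finite {card B | B. B \<subseteq> Z \<and> indep K B}"
proof -
  have "{card B | B. B \<subseteq> Z \<and> indep K B} \<subseteq> card ` Pow (ground K)"
    using assms indep_sub_ground by auto
  moreover have "finite (ground K)" using assms by (rule pre_finite)
  then have "finite (card ` Pow (ground K))" by simp
  ultimately show ?thesis by (rule finite_subset)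
qed

lemma rank_ge: "pre K \<Longrightarrow> indep K B \<Longrightarrow> B \<subseteq> Z \<Longrightarrow> card B \<le> rank K Z"
  unfolding rank_def by (rule Max_ge[OF rank_set_finite]) auto

lemma rank_obtain: assumes "pre K" shows "\<exists>B. B \<subseteq> Z \<and> indep K B \<and> card B = rank K Z"
proof -
  have ne: "{card B | B. B \<subseteq> Z \<and> indep K B} \<noteq> {}" proof -
    have "card {} \<in> {card B | B. B \<subseteq> Z \<and> indep K B}" using pre_empty[OF assms] by (auto intro!: exI[of _ "{}"])
    then show ?thesis by blast
  qed
  show ?thesis using Max_in[OF rank_set_finite[OF assms] ne] unfolding rank_def by auto
qed


lemma rank_le_card: assumes "pre K" "finite Z" shows "rank K Z \<le> card Z"
proof -
  obtain B where B: "B \<subseteq> Z" "indep K B" "card B = rank K Z" using rank_obtain[OF assms(1)] by blast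
  have "card B \<le> card Z" using card_mono[OF assms(2) B(1)] .
  then show ?thesis using B(3) by simp
qed

lemma rank_mono: assumes "pre K" "Y \<subseteq> Z" shows "rank K Y \<le> rank K Z"
proof -
  obtain B where "B \<subseteq> Y" "indep K B" "card B = rank K Y" using rank_obtain[OF assms(1)] by blast
  then show ?thesis using rank_ge[OF assms(1), of B Z] assms(2) by simp
qed

lemma rank_le_mrank: assumes "pre K" shows "rank K Z \<le> mrank K"
proof -
  obtain B where "B \<subseteq> Z" "indep K B" "card B = rank K Z" using rank_obtain[OF assms(1)] by blast
  then show ?thesis unfolding mrank_def using rank_ge[OF assms(1), of B "ground K"] indep_sub_ground[OF assms(1)] by simp
qed

lemma rank_indep: assumes "finite B" "indep K B" shows "rank K B = card B"
proof -
  have f: "finite {card C | C. C \<subseteq> B \<and> indep K C}"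
    by (rule finite_subset[of _ "card ` Pow B"]) (use assms in auto)
  show ?thesis unfolding rank_def
    by (rule Max_eqI[OF f]) (use assms in \<open>auto intro: card_mono\<close>)
qed

lemma indep_iff_nullity0:
  assumes "pre K" "A \<subseteq> ground K" shows "indep K A \<longleftrightarrow> nullity K A = 0"
proof -
  have fA: "finite A" using sub_finite[OF assms(1,2)] .
  have 1: "indep K A \<Longrightarrow> nullity K A = 0" unfolding nullity_def using rank_indep[OF fA] by simp
  have 2: "indep K A" if "nullity K A = 0"
  proof -
  from that have "card A \<le> rank K A" unfolding nullity_def by simp
  moreover obtain B where "B \<subseteq> A" "indep K B" "card B = rank K A" using rank_obtain[OF assms(1)] by blast
  ultimately have "card B = card A" using fA card_mono[OF fA \<open>B \<subseteq> A\<close>] by linarith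
  then have "B = A" using card_subset_eq[OF fA \<open>B \<subseteq> A\<close>] by simp
  then show "indep K A" using \<open>indep K B\<close> by simp
  qed
  show ?thesis using 1 2 by (intro iffI)
qed

lemma rank_union_le:
  assumes "pre K" "finite B" shows "rank K (B \<union> X) \<le> card B + rank K X"
proof -
  obtain I where I: "I \<subseteq> B \<union> X" "indep K I" "card I = rank K (B \<union> X)" using rank_obtain[OF assms(1)] by blast
  have fI: "finite I" using indep_finite[OF assms(1) I(2)] .
  have "I = (I \<inter> X) \<union> (I - X)" by blast
  then have "card I \<le> card (I \<inter> X) + card (I - X)" using card_Un_le[of "I \<inter> X" "I - X"] by simp
  moreover have "card (I \<inter> X) \<le> rank K X" using rank_ge[OF assms(1) indep_down[OF assms(1) I(2) Int_lower1] Int_lower2] .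
  moreover have "card (I - X) \<le> card B" using I(1) assms(2) by (intro card_mono) auto
  ultimately show ?thesis using I(3) by linarith
qed

lemma matroid_aug: "matroid M \<Longrightarrow> indep M A \<Longrightarrow> indep M B \<Longrightarrow> card A < card B \<Longrightarrow> \<exists>x\<in>B-A. indep M (insert x A)"
  unfolding matroid_def by (elim conjE) blast

lemma matroid_augment:
  assumes "matroid M"
  shows "indep M I \<Longrightarrow> I \<subseteq> W \<Longrightarrow> \<exists>J. I \<subseteq> J \<and> J \<subseteq> W \<and> indep M J \<and> card J = rank M W"
proof (induction "rank M W - card I" arbitrary: I rule: less_induct)
  case less
  have p: "pre M" using matroid_pre[OF assms] .
  have le: "card I \<le> rank M W" using rank_ge[OF p less(2,3)] .
  show ?case
  proof (cases "card I = rank M W")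
    case True then show ?thesis using less by blast
  next
    case False
    then have lt: "card I < rank M W" using le by simp
    obtain B where B: "B \<subseteq> W" "indep M B" "card B = rank M W" using rank_obtain[OF p] by blast
    have "card I < card B" using lt B(3) by simp
    then obtain x where x: "x \<in> B - I" "indep M (insert x I)"
      using matroid_aug[OF assms less(2) B(2)] by blast
    have fI: "finite I" using indep_finite[OF p less(2)] .
    have c: "card (insert x I) = Suc (card I)" using x fI by simp
    have "rank M W - card (insert x I) < rank M W - card I" using c lt by simp
    moreover have "insert x I \<subseteq> W" using x B(1) less(3) by blast
    ultimately obtain J where "insert x I \<subseteq> J" "J \<subseteq> W" "indep M J" "card J = rank M W"
      using less(1)[of "insert x I"] x(2) by blast
    then show ?thesis by blast
  qed
qed

lemma extend_lemma:
  assumes "pre K" "Y \<subseteq> ground K"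
  shows "\<exists>I. I \<subseteq> Y \<and> card I = min (card Y) (rank K Y + k) \<and> nullity K I \<le> k"
proof -
  have fY: "finite Y" using sub_finite[OF assms] .
  obtain B where B: "B \<subseteq> Y" "indep K B" "card B = rank K Y" using rank_obtain[OF assms(1)] by blast
  have fB: "finite B" using fY B(1) finite_subset by blast
  have cd: "card (Y - B) = card Y - rank K Y" using B fB by (simp add: card_Diff_subset)
  obtain C where C: "C \<subseteq> Y - B" "card C = min k (card Y - rank K Y)"
    using obtain_subset_with_card_n[of "min k (card Y - rank K Y)" "Y - B"] cd by force
  have fC: "finite C" using C(1) fY finite_subset by blast
  have rY: "rank K Y \<le> card Y" using rank_le_card[OF assms(1) fY] .
  have cI: "card (B \<union> C) = card B + card C" using C(1) fB fC by (intro card_Un_disjoint) auto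
  have "card B \<le> rank K (B \<union> C)" using rank_ge[OF assms(1) B(2) Un_upper1] .
  then have "nullity K (B \<union> C) \<le> k" unfolding nullity_def using cI C(2) by linarith
  moreover have "card (B \<union> C) = min (card Y) (rank K Y + k)" using cI C(2) B(3) rY by linarith
  moreover have "B \<union> C \<subseteq> Y" using B C by blast
  ultimately show ?thesis by blast
qed

lemma rank_liftlike:
  assumes "pre K" "A \<subseteq> ground K"
    and iK: "\<And>B. indep K' B \<longleftrightarrow> B \<subseteq> ground K \<and> nullity K B \<le> i"
  shows "rank K' A = min (card A) (rank K A + i)"
proof -
  have fA: "finite A" using sub_finite[OF assms(1,2)] .
  have f: "finite {card B | B. B \<subseteq> A \<and> indep K' B}"
    by (rule finite_subset[of _ "card ` Pow A"]) (use fA in auto)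
  obtain I where I: "I \<subseteq> A" "card I = min (card A) (rank K A + i)" "nullity K I \<le> i"
    using extend_lemma[OF assms(1,2)] by blast
  have "\<And>B. B \<subseteq> A \<Longrightarrow> nullity K B \<le> i \<Longrightarrow> card B \<le> min (card A) (rank K A + i)"
  proof -
    fix B assume "B \<subseteq> A" "nullity K B \<le> i"
    moreover have "rank K B \<le> rank K A" using rank_mono[OF assms(1)] \<open>B \<subseteq> A\<close> .
    moreover have "card B \<le> card A" using card_mono[OF fA \<open>B \<subseteq> A\<close>] .
    ultimately show "card B \<le> min (card A) (rank K A + i)" unfolding nullity_def by linarith
  qed
  moreover have "min (card A) (rank K A + i) \<in> {card B | B. B \<subseteq> A \<and> indep K' B}"
    by (intro CollectI exI[of _ I]) (use I assms(2) iK in auto)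
  ultimately show ?thesis unfolding rank_def[of K' A]
    by (intro Max_eqI[OF f]) (use iK in auto)
qed

lemma lift_iter:
  assumes "pre K"
  shows "ground ((lift ^^ i) K) = ground K \<and>
         (\<forall>A. indep ((lift ^^ i) K) A \<longleftrightarrow> A \<subseteq> ground K \<and> nullity K A \<le> i)"
proof (induction i)
  case 0
  then show ?case using indep_iff_nullity0[OF assms] indep_sub_ground[OF assms] by auto
next
  case (Suc i)
  let ?K = "(lift ^^ i) K"
  have iK: "\<And>B. indep ?K B \<longleftrightarrow> B \<subseteq> ground K \<and> nullity K B \<le> i" using Suc.IH by blast
  have r: "\<And>A. A \<subseteq> ground K \<Longrightarrow> rank ?K A = min (card A) (rank K A + i)"
    using rank_liftlike[OF assms _ iK] by blast
  have n: "\<And>A. A \<subseteq> ground K \<Longrightarrow> nullity ?K A \<le> 1 \<longleftrightarrow> nullity K A \<le> Suc i"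
  proof -
    fix A assume "A \<subseteq> ground K"
    then have "rank ?K A = min (card A) (rank K A + i)" by (rule r)
    then show "nullity ?K A \<le> 1 \<longleftrightarrow> nullity K A \<le> Suc i" unfolding nullity_def by linarith
  qed
  have g1: "ground ((lift ^^ Suc i) K) = ground ?K" by (simp add: lift_def)
  have i1: "\<And>A. indep ((lift ^^ Suc i) K) A \<longleftrightarrow> A \<subseteq> ground ?K \<and> nullity ?K A \<le> 1"
    by (simp add: lift_def)
  have gK: "ground ?K = ground K" using Suc.IH by (rule conjunct1)
  have "\<forall>A. indep ((lift ^^ Suc i) K) A \<longleftrightarrow> A \<subseteq> ground K \<and> nullity K A \<le> Suc i"
  proof
    fix A
    show "indep ((lift ^^ Suc i) K) A \<longleftrightarrow> A \<subseteq> ground K \<and> nullity K A \<le> Suc i"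
      unfolding i1 gK using n[of A] by blast
  qed
  then show ?case using g1 gK by simp
qed

lemma trunc_iter:
  assumes "pre K"
  shows "ground ((trunc ^^ j) K) = ground K \<and>
         (\<forall>A. indep ((trunc ^^ j) K) A \<longleftrightarrow> indep K A \<and> card A \<le> mrank K - j) \<and>
         mrank ((trunc ^^ j) K) = mrank K - j"
proof (induction j)
  case 0
  then show ?case
    using rank_ge[OF assms] rank_le_mrank[OF assms] indep_sub_ground[OF assms] by (auto simp: mrank_def)
next
  case (Suc j)
  let ?K = "(trunc ^^ j) K"
  have g0: "ground ((trunc ^^ Suc j) K) = ground ?K" by (simp add: trunc_def)
  have i0: "\<And>A. indep ((trunc ^^ Suc j) K) A \<longleftrightarrow> indep ?K A \<and> int (card A) \<le> max 0 (int (mrank ?K) - 1)"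
    by (simp add: trunc_def)
  have g: "ground ((trunc ^^ Suc j) K) = ground K" using g0 Suc.IH by simp
  have i: "\<And>A. indep ((trunc ^^ Suc j) K) A \<longleftrightarrow> indep K A \<and> card A \<le> mrank K - Suc j"
  proof -
    fix A
    have "indep ((trunc ^^ Suc j) K) A \<longleftrightarrow> indep K A \<and> card A \<le> mrank K - j \<and> int (card A) \<le> max 0 (int (mrank K - j) - 1)"
      using i0 Suc.IH by simp
    also have "\<dots> \<longleftrightarrow> indep K A \<and> card A \<le> mrank K - Suc j" by linarith
    finally show "indep ((trunc ^^ Suc j) K) A \<longleftrightarrow> indep K A \<and> card A \<le> mrank K - Suc j" .
  qed
  have fG: "finite (ground K)" using pre_finite[OF assms] .
  have f: "finite {card B | B. B \<subseteq> ground K \<and> indep ((trunc ^^ Suc j) K) B}"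
    by (rule finite_subset[of _ "card ` Pow (ground K)"]) (use fG in auto)
  obtain B0 where B0: "B0 \<subseteq> ground K" "indep K B0" "card B0 = mrank K"
    using rank_obtain[OF assms] unfolding mrank_def by blast
  obtain C where C: "C \<subseteq> B0" "card C = mrank K - Suc j"
    using obtain_subset_with_card_n[of "mrank K - Suc j" B0] B0(3) by force
  have "indep K C" using indep_down[OF assms B0(2) C(1)] .
  have "mrank K - Suc j \<in> {card B | B. B \<subseteq> ground K \<and> indep ((trunc ^^ Suc j) K) B}"
    by (intro CollectI exI[of _ C]) (use i C B0 \<open>indep K C\<close> in auto)
  then have "mrank ((trunc ^^ Suc j) K) = mrank K - Suc j"
    unfolding mrank_def[of "(trunc ^^ Suc j) K"] g rank_def[of "(trunc ^^ Suc j) K"]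
    by (intro Max_eqI[OF f]) (use i in auto)
  then show ?case using g i by blast
qed

lemma rank_restrict: "Y \<subseteq> X \<Longrightarrow> rank (restrict N X) Y = rank N Y"
  unfolding rank_def restrict_def by (auto intro!: arg_cong[where f=Max])

lemma pre_restrict: assumes "matroid N" "X \<subseteq> ground N" shows "pre (restrict N X)"
proof -
  have p: "pre N" using matroid_pre[OF assms(1)] .
  show ?thesis
  proof (rule preI)
    show "finite (ground (restrict N X))" using sub_finite[OF p assms(2)] by (simp add: restrict_def)
    show "indep (restrict N X) {}" using pre_empty[OF p] by (simp add: restrict_def)
    show "A \<subseteq> ground (restrict N X)" if "indep (restrict N X) A" for A using that by (simp add: restrict_def)
    show "indep (restrict N X) B" if "indep (restrict N X) A" "B \<subseteq> A" for A B
      using that indep_down[OF p, of A B] by (auto simp add: restrict_def)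
  qed
qed

lemma rank_contract:
  assumes "matroid M" "X \<subseteq> ground M" "Z \<subseteq> ground M - X"
  shows "rank (contract M X) Z = rank M (Z \<union> X) - rank M X"
proof -
  have p: "pre M" using matroid_pre[OF assms(1)] .
  have fG: "finite (ground M)" using pre_finite[OF p] .
  have fZ: "finite Z" using assms(3) fG finite_subset by blast
  have f: "finite {card B | B. B \<subseteq> Z \<and> indep (contract M X) B}"
    by (rule finite_subset[of _ "card ` Pow Z"]) (use fZ in auto)
  obtain BX where BX: "BX \<subseteq> X" "indep M BX" "card BX = rank M X" using rank_obtain[OF p] by blast
  obtain J where J: "BX \<subseteq> J" "J \<subseteq> Z \<union> X" "indep M J" "card J = rank M (Z \<union> X)"
    using matroid_augment[OF assms(1) BX(2), of "Z \<union> X"] BX(1) by blast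
  have fJ: "finite J" using indep_finite[OF p J(3)] .
  have JX: "J \<inter> X = BX"
  proof -
    have "card (J \<inter> X) \<le> rank M X" using rank_ge[OF p indep_down[OF p J(3) Int_lower1] Int_lower2] .
    moreover have "BX \<subseteq> J \<inter> X" using J BX by blast
    moreover have fJX: "finite (J \<inter> X)" using fJ by simp
    ultimately have "card BX = card (J \<inter> X)" using BX(3) card_mono[OF fJX] by (metis le_antisym)
    then show ?thesis using card_subset_eq[OF fJX \<open>BX \<subseteq> J \<inter> X\<close>] by simp
  qed
  define B where "B = J - X"
  have BZ: "B \<subseteq> Z" using J(2) B_def by blast
  have fB: "finite B" using BZ fZ finite_subset by blast
  have JB: "J = B \<union> BX" using JX B_def by blast
  have dj: "B \<inter> BX = {}" using BX(1) B_def by blast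
  have fBX: "finite BX" using fJ J(1) finite_subset by blast
  have cB: "card J = card B + card BX" using JB card_Un_disjoint[OF fB fBX dj] by simp
  have "J \<subseteq> B \<union> X" using JB BX(1) by blast
  then have "card J \<le> rank M (B \<union> X)" using rank_ge[OF p J(3)] by simp
  moreover have "rank M (B \<union> X) \<le> card B + rank M X" using rank_union_le[OF p fB] .
  ultimately have Bi: "indep (contract M X) B"
    unfolding contract_def using cB BX(3) BZ assms(3) by auto
  have up: "\<And>C. C \<subseteq> Z \<Longrightarrow> indep (contract M X) C \<Longrightarrow> card C \<le> rank M (Z \<union> X) - rank M X"
  proof -
    fix C assume "C \<subseteq> Z" "indep (contract M X) C"
    then have "rank M (C \<union> X) = card C + rank M X" unfolding contract_def by auto
    moreover have "rank M (C \<union> X) \<le> rank M (Z \<union> X)" using rank_mono[OF p, of "C \<union> X" "Z \<union> X"] \<open>C \<subseteq> Z\<close> by auto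
    ultimately show "card C \<le> rank M (Z \<union> X) - rank M X" by linarith
  qed
  show ?thesis unfolding rank_def[of "contract M X"]
    by (intro Max_eqI[OF f]) (use up Bi BZ cB J(4) BX(3) in auto)
qed

lemma pre_contract:
  assumes "matroid M" "X \<subseteq> ground M" shows "pre (contract M X)"
proof -
  have p: "pre M" using matroid_pre[OF assms(1)] .
  have fG: "finite (ground M)" using pre_finite[OF p] .
  have "rank M (B' \<union> X) = card B' + rank M X"
    if "B \<subseteq> ground M - X" "rank M (B \<union> X) = card B + rank M X" "B' \<subseteq> B" for B B'
  proof -
    have fB: "finite B" using that fG finite_subset by blast
    have fB': "finite B'" using that fB finite_subset by blast
    have "B \<union> X = (B - B') \<union> (B' \<union> X)" using that by blast
    then have "rank M (B \<union> X) \<le> card (B - B') + rank M (B' \<union> X)"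
      using rank_union_le[OF p, of "B - B'" "B' \<union> X"] fB by simp
    moreover have "card B = card (B - B') + card B'"
      using card_Diff_subset[OF fB' that(3)] card_mono[OF fB that(3)] by simp
    moreover have "rank M (B' \<union> X) \<le> card B' + rank M X" using rank_union_le[OF p fB'] .
    ultimately show ?thesis using that by linarith
  qed
  note down = this
  show ?thesis
  proof (rule preI)
    show "finite (ground (contract M X))" using fG by (simp add: contract_def)
    show "indep (contract M X) {}" by (simp add: contract_def)
    show "A \<subseteq> ground (contract M X)" if "indep (contract M X) A" for A using that by (simp add: contract_def)
    show "indep (contract M X) B" if "indep (contract M X) A" "B \<subseteq> A" for A B
      using that down[of A B] by (simp add: contract_def) blast
  qed
qed



lemma matroid_eqI:
  fixes A B :: "'a matroid"
  assumes "ground A = ground B" "\<And>I. indep A I = indep B I"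
  shows "A = B"
  proof (rule matroid.equality)
  show "ground A = ground B" by (rule assms(1))
  show "indep A = indep B" using assms(2) by (rule ext)
  show "matroid.more A = matroid.more B" by simp
qed

lemma indep_fp: "indep (free_product M N) I \<longleftrightarrow>
   I \<subseteq> ground M \<union> ground N \<and> indep M (I \<inter> ground M) \<and> nullity N (I \<inter> ground N) \<le> corank M (I \<inter> ground M)"
  by (simp add: free_product_def)

lemma ground_fp: "ground (free_product M N) = ground M \<union> ground N"
  by (simp add: free_product_def)

lemma rank_fp:
  assumes mM: "matroid M" and mN: "matroid N" and dj: "ground M \<inter> ground N = {}"
    and XS: "X \<subseteq> ground M" and YT: "Y \<subseteq> ground N"
  shows "rank (free_product M N) (X \<union> Y) = min (rank M X + card Y) (mrank M + rank N Y)"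
proof -
  let ?S = "ground M" and ?T = "ground N" and ?P = "free_product M N"
  have pM: "pre M" using matroid_pre[OF mM] .
  have pN: "pre N" using matroid_pre[OF mN] .
  have fX: "finite X" using sub_finite[OF pM XS] .
  have fY: "finite Y" using sub_finite[OF pN YT] .
  have fS: "finite ?S" using pre_finite[OF pM] .
  have fT: "finite ?T" using pre_finite[OF pN] .
  have f: "finite {card B | B. B \<subseteq> X \<union> Y \<and> indep ?P B}"
    by (rule finite_subset[of _ "card ` Pow (X \<union> Y)"]) (use fX fY in auto)
  have up: "card I \<le> min (rank M X + card Y) (mrank M + rank N Y)" if I: "I \<subseteq> X \<union> Y" "indep ?P I" for I
  proof -
    have i: "I \<subseteq> ?S \<union> ?T" "indep M (I \<inter> ?S)" "nullity N (I \<inter> ?T) \<le> corank M (I \<inter> ?S)"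
      using I(2) by (simp_all add: indep_fp)
    have IS: "I \<inter> ?S \<subseteq> X" using I(1) YT dj by blast
    have IT: "I \<inter> ?T \<subseteq> Y" using I(1) XS dj by blast
    have fIS: "finite (I \<inter> ?S)" using fS by simp
    have fIT: "finite (I \<inter> ?T)" using fT by simp
    have "I = (I \<inter> ?S) \<union> (I \<inter> ?T)" using i(1) by blast
    moreover have "(I \<inter> ?S) \<inter> (I \<inter> ?T) = {}" using dj by blast
    ultimately have cI: "card I = card (I \<inter> ?S) + card (I \<inter> ?T)"
      using card_Un_disjoint[OF fIS fIT] by simp
    have r1: "rank M (I \<inter> ?S) = card (I \<inter> ?S)" using rank_indep[OF fIS i(2)] .
    have r2: "rank M (I \<inter> ?S) \<le> rank M X" using rank_mono[OF pM IS] .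
    have r3: "rank M (I \<inter> ?S) \<le> mrank M" using rank_le_mrank[OF pM] .
    have r4: "card (I \<inter> ?T) \<le> card Y" using card_mono[OF fY IT] .
    have r5: "rank N (I \<inter> ?T) \<le> rank N Y" using rank_mono[OF pN IT] .
    have r6: "rank N (I \<inter> ?T) \<le> card (I \<inter> ?T)" using rank_le_card[OF pN fIT] .
    show ?thesis using i(3) cI r1 r2 r3 r4 r5 r6 unfolding nullity_def corank_def by arith
  qed
  obtain BX where BX: "BX \<subseteq> X" "indep M BX" "card BX = rank M X" using rank_obtain[OF pM] by blast
  obtain IT where IT: "IT \<subseteq> Y" "card IT = min (card Y) (rank N Y + (mrank M - rank M X))"
      "nullity N IT \<le> mrank M - rank M X"
    using extend_lemma[OF pN YT] by blast
  have fBX: "finite BX" using fX BX(1) finite_subset by blast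
  have fIT: "finite IT" using fY IT(1) finite_subset by blast
  have e1: "(BX \<union> IT) \<inter> ?S = BX" using BX(1) XS IT(1) YT dj by blast
  have e2: "(BX \<union> IT) \<inter> ?T = IT" using BX(1) XS IT(1) YT dj by blast
  have dj2: "BX \<inter> IT = {}" using BX(1) XS IT(1) YT dj by blast
  have cI: "card (BX \<union> IT) = card BX + card IT" using card_Un_disjoint[OF fBX fIT dj2] .
  have rb: "rank M BX = card BX" using rank_indep[OF fBX BX(2)] .
  have a_le: "rank M X \<le> mrank M" using rank_le_mrank[OF pM] .
  have "indep ?P (BX \<union> IT)"
    unfolding indep_fp e1 e2 corank_def using BX XS IT YT rb by auto
  moreover have "BX \<union> IT \<subseteq> X \<union> Y" using BX IT by blast
  moreover have "card (BX \<union> IT) = min (rank M X + card Y) (mrank M + rank N Y)"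
    using cI IT(2) BX(3) a_le by linarith
  ultimately have mem: "min (rank M X + card Y) (mrank M + rank N Y) \<in> {card B | B. B \<subseteq> X \<union> Y \<and> indep ?P B}"
    by (intro CollectI exI[of _ "BX \<union> IT"]) auto
  show ?thesis unfolding rank_def[of ?P]
    by (rule Max_eqI[OF f]) (use up mem in auto)
qed



lemma arith_lemma: "x \<le> (s::nat) \<Longrightarrow> s \<le> a + x \<Longrightarrow> s \<le> R \<Longrightarrow> n0 \<le> n1 \<Longrightarrow> n1 \<le> t + n0 \<Longrightarrow> n0 \<le> y \<Longrightarrow> x \<le> R \<Longrightarrow>
  (min (s + (t + y)) (R + n1) = a + t + min (x + y) (R + n0)) \<longleftrightarrow> (s = a + x \<and> a \<le> R - x - (y - n0) \<and> t - (n1 - n0) \<le> R - x - (y - n0) - a)"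
  by (simp add: min_def) arith

lemma part1:
  assumes mM: "matroid M" and mN: "matroid N" and dj: "ground M \<inter> ground N = {}"
    and US: "U \<subseteq> ground M \<union> ground N"
  shows "restrict (free_product M N) U =
           free_product (restrict M (U \<inter> ground M))
             ((lift ^^ corank M (U \<inter> ground M)) (restrict N (U \<inter> ground N)))"
proof -
  let ?S = "ground M" and ?T = "ground N" and ?P = "free_product M N"
  define X0 where "X0 = U \<inter> ?S"
  define Y0 where "Y0 = U \<inter> ?T"
  define i where "i = corank M X0"
  define K where "K = restrict N Y0"
  define LK where "LK = (lift ^^ i) K"
  define M' where "M' = restrict M X0"
  have pM: "pre M" using matroid_pre[OF mM] .
  have pN: "pre N" using matroid_pre[OF mN] .
  have pK: "pre K" unfolding K_def using pre_restrict[OF mN] Y0_def by blast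
  have gK: "ground K = Y0" by (simp add: K_def restrict_def)
  have LI: "ground LK = Y0" "\<And>A. indep LK A \<longleftrightarrow> A \<subseteq> Y0 \<and> nullity K A \<le> i"
    using lift_iter[OF pK, of i] gK unfolding LK_def by auto
  have gM': "ground M' = X0" by (simp add: M'_def restrict_def)
  have "restrict ?P U = free_product M' LK"
  proof (rule matroid_eqI)
    show "ground (restrict ?P U) = ground (free_product M' LK)"
      unfolding ground_fp gM' LI(1) using US X0_def Y0_def by (auto simp: restrict_def)
  next
    fix I
    have L: "indep (restrict ?P U) I \<longleftrightarrow> I \<subseteq> U \<and> indep ?P I" by (simp add: restrict_def)
    have R: "indep (free_product M' LK) I \<longleftrightarrow> I \<subseteq> X0 \<union> Y0 \<and> indep M' (I \<inter> X0) \<and>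
        nullity LK (I \<inter> Y0) \<le> corank M' (I \<inter> X0)"
      unfolding indep_fp gM' LI(1) ..
    have UXY: "U = X0 \<union> Y0" using US X0_def Y0_def by blast
    show "indep (restrict ?P U) I \<longleftrightarrow> indep (free_product M' LK) I"
    proof (cases "I \<subseteq> U")
      case False
      have "\<not> indep (restrict ?P U) I" using L False by simp
      moreover have "\<not> indep (free_product M' LK) I" using R False UXY by simp
      ultimately show ?thesis by simp
    next
      case True
      have e1: "I \<inter> X0 = I \<inter> ?S" using True X0_def by blast
      have e2: "I \<inter> Y0 = I \<inter> ?T" using True Y0_def by blast
      have IS: "I \<inter> ?S \<subseteq> X0" using True X0_def by blast
      have IT: "I \<inter> ?T \<subseteq> Y0" using True Y0_def by blast
      have IST: "I \<subseteq> ?S \<union> ?T" using True US by blast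
      have a1: "indep M' (I \<inter> ?S) \<longleftrightarrow> indep M (I \<inter> ?S)" using IS by (simp add: M'_def restrict_def)
      have a2: "corank M' (I \<inter> ?S) = rank M X0 - rank M (I \<inter> ?S)"
        unfolding corank_def mrank_def gM' unfolding M'_def using rank_restrict[OF IS] rank_restrict[of X0 X0 M] by simp
      have iK: "\<And>B. indep LK B \<longleftrightarrow> B \<subseteq> ground K \<and> nullity K B \<le> i" using LI(2) gK by simp
      have rL: "rank LK (I \<inter> ?T) = min (card (I \<inter> ?T)) (rank K (I \<inter> ?T) + i)"
        using rank_liftlike[OF pK _ iK] IT gK by simp
      have rK: "rank K (I \<inter> ?T) = rank N (I \<inter> ?T)" unfolding K_def using rank_restrict[OF IT] .
      have a3: "nullity LK (I \<inter> ?T) = card (I \<inter> ?T) - min (card (I \<inter> ?T)) (rank N (I \<inter> ?T) + i)"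
        unfolding nullity_def rL rK ..
      have fIT: "finite (I \<inter> ?T)" using pre_finite[OF pN] by simp
      have b1: "rank N (I \<inter> ?T) \<le> card (I \<inter> ?T)" using rank_le_card[OF pN fIT] .
      have b2: "rank M (I \<inter> ?S) \<le> rank M X0" using rank_mono[OF pM IS] .
      have b3: "rank M X0 \<le> mrank M" using rank_le_mrank[OF pM] .
      have ieq: "nullity N (I \<inter> ?T) \<le> corank M (I \<inter> ?S) \<longleftrightarrow>
          nullity LK (I \<inter> ?T) \<le> corank M' (I \<inter> ?S)"
        unfolding a2 a3 unfolding nullity_def corank_def i_def using b1 b2 b3 by arith
      have P: "indep ?P I \<longleftrightarrow> I \<subseteq> ?S \<union> ?T \<and> indep M (I \<inter> ?S) \<and> nullity N (I \<inter> ?T) \<le> corank M (I \<inter> ?S)"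
        by (rule indep_fp)
      have "indep (restrict ?P U) I \<longleftrightarrow> indep M (I \<inter> ?S) \<and> nullity N (I \<inter> ?T) \<le> corank M (I \<inter> ?S)"
        using L P True IST by blast
      moreover have "indep (free_product M' LK) I \<longleftrightarrow> indep M (I \<inter> ?S) \<and> nullity LK (I \<inter> ?T) \<le> corank M' (I \<inter> ?S)"
        using R e1 e2 a1 True UXY by simp
      ultimately show ?thesis using ieq by simp
    qed
  qed
  then show ?thesis unfolding M'_def LK_def K_def i_def X0_def Y0_def .
qed


lemma part2:
  assumes mM: "matroid M" and mN: "matroid N" and dj: "ground M \<inter> ground N = {}"
    and US: "U \<subseteq> ground M \<union> ground N"
  shows "contract (free_product M N) U =
           free_product ((trunc ^^ nullity N (U \<inter> ground N)) (contract M (U \<inter> ground M)))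
             (contract N (U \<inter> ground N))"
proof -
  let ?S = "ground M" and ?T = "ground N" and ?P = "free_product M N"
  define X0 where "X0 = U \<inter> ?S"
  define Y0 where "Y0 = U \<inter> ?T"
  define j where "j = nullity N Y0"
  define K2 where "K2 = contract M X0"
  define TK where "TK = (trunc ^^ j) K2"
  define N' where "N' = contract N Y0"
  have pM: "pre M" using matroid_pre[OF mM] .
  have pN: "pre N" using matroid_pre[OF mN] .
  have X0S: "X0 \<subseteq> ?S" unfolding X0_def by blast
  have Y0T: "Y0 \<subseteq> ?T" unfolding Y0_def by blast
  have pK2: "pre K2" unfolding K2_def using pre_contract[OF mM X0S] .
  have gK2: "ground K2 = ?S - X0" by (simp add: K2_def contract_def)
  have TI: "ground TK = ?S - X0" "\<And>A. indep TK A \<longleftrightarrow> indep K2 A \<and> card A \<le> mrank K2 - j"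
      "mrank TK = mrank K2 - j"
    using trunc_iter[OF pK2, of j] gK2 unfolding TK_def by auto
  have mK2: "mrank K2 = mrank M - rank M X0"
  proof -
    have "mrank K2 = rank M ((?S - X0) \<union> X0) - rank M X0"
      unfolding mrank_def gK2 unfolding K2_def using rank_contract[OF mM X0S, of "?S - X0"] by simp
    moreover have "(?S - X0) \<union> X0 = ?S" using X0S by blast
    ultimately show ?thesis unfolding mrank_def by simp
  qed
  have gN': "ground N' = ?T - Y0" by (simp add: N'_def contract_def)
  have UXY: "U = X0 \<union> Y0" using US X0_def Y0_def by blast
  have "contract ?P U = free_product TK N'"
  proof (rule matroid_eqI)
    show "ground (contract ?P U) = ground (free_product TK N')"
      unfolding ground_fp TI(1) gN' using US X0_def Y0_def by (auto simp: contract_def ground_fp)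
  next
    fix A
    have L: "indep (contract ?P U) A \<longleftrightarrow> A \<subseteq> (?S \<union> ?T) - U \<and> rank ?P (A \<union> U) = card A + rank ?P U"
      by (simp add: contract_def ground_fp)
    have R: "indep (free_product TK N') A \<longleftrightarrow> A \<subseteq> (?S - X0) \<union> (?T - Y0) \<and> indep TK (A \<inter> (?S - X0)) \<and>
        nullity N' (A \<inter> (?T - Y0)) \<le> corank TK (A \<inter> (?S - X0))"
      unfolding indep_fp TI(1) gN' ..
    have G: "(?S \<union> ?T) - U = (?S - X0) \<union> (?T - Y0)" using US X0_def Y0_def by blast
    show "indep (contract ?P U) A \<longleftrightarrow> indep (free_product TK N') A"
    proof (cases "A \<subseteq> (?S \<union> ?T) - U")
      case False
      have "\<not> indep (contract ?P U) A" using L False by simp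
      moreover have "\<not> indep (free_product TK N') A" using R False G by simp
      ultimately show ?thesis by simp
    next
      case True
      define AS where "AS = A \<inter> ?S"
      define AT where "AT = A \<inter> ?T"
      have e1: "A \<inter> (?S - X0) = AS" using True AS_def X0_def by blast
      have e2: "A \<inter> (?T - Y0) = AT" using True AT_def Y0_def by blast
      have ASg: "AS \<subseteq> ?S - X0" using True AS_def X0_def by blast
      have ATg: "AT \<subseteq> ?T - Y0" using True AT_def Y0_def by blast
      have fS: "finite ?S" using pre_finite[OF pM] .
      have fT: "finite ?T" using pre_finite[OF pN] .
      have fAS: "finite AS" using fS AS_def by simp
      have fAT: "finite AT" using fT AT_def by simp
      have fY0: "finite Y0" using fT Y0_def by simp
      have cA: "card A = card AS + card AT"
      proof -
        have "A = AS \<union> AT" using True AS_def AT_def by blast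
        moreover have "AS \<inter> AT = {}" using dj AS_def AT_def by blast
        ultimately show ?thesis using card_Un_disjoint[OF fAS fAT] by simp
      qed
      have cAY: "card (AT \<union> Y0) = card AT + card Y0"
        using card_Un_disjoint[OF fAT fY0] ATg by blast
      have AU: "A \<union> U = (AS \<union> X0) \<union> (AT \<union> Y0)" using True UXY AS_def AT_def X0_def Y0_def by blast
      have s1: "AS \<union> X0 \<subseteq> ?S" using ASg X0S by blast
      have s2: "AT \<union> Y0 \<subseteq> ?T" using ATg Y0T by blast
      have rPAU: "rank ?P (A \<union> U) = min (rank M (AS \<union> X0) + (card AT + card Y0)) (mrank M + rank N (AT \<union> Y0))"
        unfolding AU rank_fp[OF mM mN dj s1 s2] cAY ..
      have rPU: "rank ?P U = min (rank M X0 + card Y0) (mrank M + rank N Y0)"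
        unfolding UXY rank_fp[OF mM mN dj X0S Y0T] ..
      have iK2: "indep K2 AS \<longleftrightarrow> rank M (AS \<union> X0) = card AS + rank M X0"
        using ASg by (simp add: K2_def contract_def)
      have coTK: "corank TK AS = (mrank K2 - j) - card AS" if "indep TK AS"
        unfolding corank_def TI(3) using rank_indep[OF fAS that] by simp
      have nN': "nullity N' AT = card AT - (rank N (AT \<union> Y0) - rank N Y0)"
        unfolding nullity_def N'_def using rank_contract[OF mN Y0T ATg] by simp
      have b1: "rank M X0 \<le> rank M (AS \<union> X0)" using rank_mono[OF pM, of X0 "AS \<union> X0"] by blast
      have b2: "rank M (AS \<union> X0) \<le> card AS + rank M X0" using rank_union_le[OF pM fAS] .
      have b3: "rank M (AS \<union> X0) \<le> mrank M" using rank_le_mrank[OF pM] .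
      have b4: "rank N Y0 \<le> rank N (AT \<union> Y0)" using rank_mono[OF pN, of Y0 "AT \<union> Y0"] by blast
      have b5: "rank N (AT \<union> Y0) \<le> card AT + rank N Y0" using rank_union_le[OF pN fAT] .
      have b6: "rank N Y0 \<le> card Y0" using rank_le_card[OF pN fY0] .
      have b7: "rank M X0 \<le> mrank M" using rank_le_mrank[OF pM] .
      have jv: "j = card Y0 - rank N Y0" unfolding j_def nullity_def ..
      have AR: "(min (rank M (AS \<union> X0) + (card AT + card Y0)) (mrank M + rank N (AT \<union> Y0))
            = card AS + card AT + min (rank M X0 + card Y0) (mrank M + rank N Y0)) \<longleftrightarrow>
          (rank M (AS \<union> X0) = card AS + rank M X0 \<and>
           card AS \<le> mrank M - rank M X0 - (card Y0 - rank N Y0) \<and>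
           card AT - (rank N (AT \<union> Y0) - rank N Y0) \<le> mrank M - rank M X0 - (card Y0 - rank N Y0) - card AS)"
        by (rule arith_lemma[OF b1 b2 b3 b4 b5 b6 b7])
      have "indep (contract ?P U) A \<longleftrightarrow>
          (min (rank M (AS \<union> X0) + (card AT + card Y0)) (mrank M + rank N (AT \<union> Y0))
            = card AS + card AT + min (rank M X0 + card Y0) (mrank M + rank N Y0))"
        using L True rPAU rPU cA by simp
      also have "\<dots> \<longleftrightarrow> indep TK AS \<and> nullity N' AT \<le> corank TK AS"
      proof -
        have "indep TK AS \<longleftrightarrow> rank M (AS \<union> X0) = card AS + rank M X0 \<and>
              card AS \<le> mrank M - rank M X0 - (card Y0 - rank N Y0)"
          using TI(2) iK2 mK2 jv by simp
        then show ?thesis unfolding AR using coTK nN' mK2 jv by auto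
      qed
      also have "\<dots> \<longleftrightarrow> indep (free_product TK N') A"
        using R e1 e2 True G by simp
      finally show ?thesis .
    qed
  qed
  then show ?thesis unfolding TK_def N'_def K2_def j_def X0_def Y0_def .
qed


theorem proposition5p2:
  fixes M N :: "'a matroid" and U :: "'a set"
  assumes "matroid M" and "matroid N"
    and "ground M \<inter> ground N = {}"
    and "U \<subseteq> ground M \<union> ground N"
  shows "restrict (free_product M N) U =
           free_product (restrict M (U \<inter> ground M))
             ((lift ^^ corank M (U \<inter> ground M)) (restrict N (U \<inter> ground N)))
       \<and> contract (free_product M N) U =
           free_product ((trunc ^^ nullity N (U \<inter> ground N)) (contract M (U \<inter> ground M)))
             (contract N (U \<inter> ground N))"
proof (rule conjI)
  show "restrict (free_product M N) U =
           free_product (restrict M (U \<inter> ground M))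
             ((lift ^^ corank M (U \<inter> ground M)) (restrict N (U \<inter> ground N)))"
    by (rule part1[OF assms])
  show "contract (free_product M N) U =
           free_product ((trunc ^^ nullity N (U \<inter> ground N)) (contract M (U \<inter> ground M)))
             (contract N (U \<inter> ground N))"
    by (rule part2[OF assms])
qed

end
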